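(* Let $Y\in\mathbb{R}^n$ satisfy $Y=X\beta+\sigma\xi$ with a deterministic matrix $X\in\mathbb{R}^{n\times p}$ with columns $X_1,\dots,X_p$, $\sigma>0$ and $\xi\sim\mathcal{N}(0,\mathbb{I}_n)$. For any $a>0$, $q\ge1$ and $s<p$, for every $s'\in(0,s)$, $$\inf_{\hat\beta}\sup_{\beta\in\Omega^p_{s,a}}\mathbf{E}_\beta\big(\|\hat\beta-\beta\|_q^q\big)\ \ge\ a^q\frac{s'}{s}\Big(\frac{1}{2^q}\Psi(p,s,a,\sigma,X)-2s\,e^{-\frac{(s-s')^2}{2s}}\Big),$$ where the infimum is over all estimators $\hat\beta$.
   Context: $\Omega^p_{s,a}=\{\beta\in\mathbb{R}^p:\ |\beta|_0\le s\ \text{and}\ |\beta_i|\ge a\ \forall i\in S_\beta\}$, where $|\beta|_0$ is the number of nonzero entries and $S_\beta$ the set of indices of nonzero entries. $\mathbf{E}_\beta$ is expectation under the model with parameter $\beta$; $\|\cdot\|_q$ is the $\ell_q$ norm. With $\varepsilon$ a standard Gaussian random variable and $t_j(a):=\frac a2+\frac{\sigma^2\log(\frac ps-1)}{a\|X_j\|_2^2}$ for $j=1,\dots,p$, $$\Psi(p,s,a,\sigma,X):=\sum_{j=1}^p\Big(\frac sp\mathbf{P}\big(\sigma\varepsilon\ge(a-t_j(a))\|X_j\|_2\big)+\Big(1-\frac sp\Big)\mathbf{P}\big(\sigma\varepsilon\ge t_j(a)\|X_j\|_2\big)\Big).$$ *)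

theory Defs
  imports "HOL-Probability.Probability"
begin

definition std_gauss :: "real measure" where
  "std_gauss = density lborel std_normal_density"

definition gauss_vec :: "nat \<Rightarrow> (nat \<Rightarrow> real) measure" where
  "gauss_vec n = PiM {..<n} (\<lambda>_. std_gauss)"

definition obs :: "nat \<Rightarrow> nat \<Rightarrow> (nat \<Rightarrow> nat \<Rightarrow> real) \<Rightarrow> real \<Rightarrow> (nat \<Rightarrow> real)
                   \<Rightarrow> (nat \<Rightarrow> real) \<Rightarrow> (nat \<Rightarrow> real)" where
  "obs n p X \<sigma> \<beta> \<xi> = restrict (\<lambda>i. (\<Sum>j<p. X i j * \<beta> j) + \<sigma> * \<xi> i) {..<n}"

definition l0 :: "nat \<Rightarrow> (nat \<Rightarrow> real) \<Rightarrow> nat" where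
  "l0 p \<beta> = card {i. i < p \<and> \<beta> i \<noteq> 0}"

definition Omega :: "nat \<Rightarrow> nat \<Rightarrow> real \<Rightarrow> (nat \<Rightarrow> real) set" where
  "Omega p s a = {\<beta>. (\<forall>i\<ge>p. \<beta> i = 0) \<and> l0 p \<beta> \<le> s \<and>
                      (\<forall>i<p. \<beta> i \<noteq> 0 \<longrightarrow> \<bar>\<beta> i\<bar> \<ge> a)}"

definition lq_pow :: "nat \<Rightarrow> real \<Rightarrow> (nat \<Rightarrow> real) \<Rightarrow> real" where
  "lq_pow p q v = (\<Sum>i<p. \<bar>v i\<bar> powr q)"

definition colnorm2 :: "nat \<Rightarrow> (nat \<Rightarrow> nat \<Rightarrow> real) \<Rightarrow> nat \<Rightarrow> real" where
  "colnorm2 n X j = (\<Sum>i<n. (X i j)\<^sup>2)"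

definition tj :: "nat \<Rightarrow> nat \<Rightarrow> nat \<Rightarrow> real \<Rightarrow> real \<Rightarrow> (nat \<Rightarrow> nat \<Rightarrow> real) \<Rightarrow> nat \<Rightarrow> real" where
  "tj n p s a \<sigma> X j = a / 2 + \<sigma>\<^sup>2 * ln (real p / real s - 1) / (a * colnorm2 n X j)"

definition Psi :: "nat \<Rightarrow> nat \<Rightarrow> nat \<Rightarrow> real \<Rightarrow> real \<Rightarrow> (nat \<Rightarrow> nat \<Rightarrow> real) \<Rightarrow> real" where
  "Psi n p s a \<sigma> X = (\<Sum>j<p.
      (real s / real p) * measure std_gauss
          {e. \<sigma> * e \<ge> (a - tj n p s a \<sigma> X j) * sqrt (colnorm2 n X j)}
    + (1 - real s / real p) * measure std_gauss
          {e. \<sigma> * e \<ge> tj n p s a \<sigma> X j * sqrt (colnorm2 n X j)})"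

end

theory Submission
  imports Defs
begin

lemma std_gauss_prob: "prob_space std_gauss"
  unfolding std_gauss_def by (rule prob_space_normal_density) simp

lemma sets_std_gauss[simp, measurable_cong]: "sets std_gauss = sets borel"
  unfolding std_gauss_def by simp

lemma space_std_gauss[simp]: "space std_gauss = UNIV"
  unfolding std_gauss_def by simp

lemma gauss_vec_prob: "prob_space (gauss_vec n)"
  unfolding gauss_vec_def by (intro prob_space_PiM std_gauss_prob)

lemma sets_gauss_vec[measurable_cong]: "sets (gauss_vec n) = sets (PiM {..<n} (\<lambda>_. borel :: real measure))"
  unfolding gauss_vec_def by (intro sets_PiM_cong) auto

lemma space_gauss_vec: "space (gauss_vec n) = PiE {..<n} (\<lambda>_. UNIV)"
  unfolding gauss_vec_def by (simp add: space_PiM)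

lemma std_gauss_singleton: "emeasure std_gauss {x} = 0"
  unfolding std_gauss_def by (simp add: emeasure_density)

lemma std_gauss_shift:
  "distr std_gauss borel (\<lambda>x. x + h) = density std_gauss (\<lambda>x. ennreal (exp (h * x - h^2/2)))"
proof -
  interpret prob_space std_gauss by (rule std_gauss_prob)
  have "distributed std_gauss lborel (\<lambda>x. x) (normal_density 0 1)"
    unfolding distributed_def std_gauss_def by (auto simp: distr_id2)
  from normal_density_affine[OF this, of 1 h]
  have "distributed std_gauss lborel (\<lambda>x. h + x) (normal_density h 1)" by simp
  then have "distr std_gauss lborel (\<lambda>x. h + x) = density lborel (normal_density h 1)"
    unfolding distributed_def by simp
  also have "\<dots> = density std_gauss (\<lambda>x. ennreal (exp (h * x - h^2/2)))"
  proof -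
    have eq: "normal_density h 1 x = normal_density 0 1 x * exp (h * x - h^2/2)" for x
    proof -
      have "- ((x - h)^2) / 2 = - (x^2) / 2 + (h * x - h^2 / 2)" by (simp add: power2_diff)
      then show ?thesis unfolding normal_density_def by (simp add: exp_add[symmetric])
    qed
    show ?thesis
      unfolding std_gauss_def
      by (subst density_density_eq) (auto simp: eq ennreal_mult'[symmetric] intro!: density_cong)
  qed
  finally have *: "distr std_gauss lborel (\<lambda>x. h + x) = density std_gauss (\<lambda>x. ennreal (exp (h * x - h^2/2)))" .
  have "distr std_gauss borel (\<lambda>x. x + h) = distr std_gauss lborel (\<lambda>x. h + x)"
    by (rule distr_cong) (auto simp: add.commute)
  with * show ?thesis by simp
qed

definition gshift :: "nat \<Rightarrow> (nat \<Rightarrow> real) \<Rightarrow> (nat \<Rightarrow> real) \<Rightarrow> (nat \<Rightarrow> real)" where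
  "gshift n h \<xi> = restrict (\<lambda>i. \<xi> i + h i) {..<n}"

lemma shift_measurable[measurable]: "gshift n h \<in> measurable (gauss_vec n) (gauss_vec n)"
  unfolding gshift_def by (simp add: measurable_cong_sets[OF sets_gauss_vec sets_gauss_vec])

lemma shift_space: "gshift n h \<xi> \<in> space (gauss_vec n)"
  unfolding gshift_def space_gauss_vec by auto

lemma gauss_shift:
  "distr (gauss_vec n) (gauss_vec n) (gshift n h) =
   density (gauss_vec n) (\<lambda>\<xi>. ennreal (exp ((\<Sum>i<n. h i * \<xi> i) - (\<Sum>i<n. (h i)^2) / 2)))"
  (is "?D = ?R")
proof -
  let ?I = "{..<n}"
  let ?M = "\<lambda>i. distr std_gauss borel (\<lambda>x. x + h i)"
  interpret P: product_prob_space ?M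
    by (intro product_prob_spaceI prob_space.prob_space_distr std_gauss_prob) simp
  interpret G: product_prob_space "\<lambda>_::nat. std_gauss"
    by (intro product_prob_spaceI std_gauss_prob)
  have setsM: "sets (PiM ?I ?M) = sets (gauss_vec n)"
    unfolding sets_gauss_vec by (intro sets_PiM_cong) auto
  have eM: "emeasure (?M i) B = emeasure std_gauss {x. x + h i \<in> B}" if "B \<in> sets borel" for i B
    using that by (subst emeasure_distr) (auto simp: vimage_def)
  have 1: "?D = PiM ?I ?M"
  proof (rule P.PiM_eqI)
    show "sets ?D = sets (PiM ?I ?M)" using setsM by simp
    fix A assume A: "\<And>i. i \<in> ?I \<Longrightarrow> A i \<in> sets (?M i)"
    have AP: "PiE ?I A \<in> sets (gauss_vec n)"
      unfolding sets_gauss_vec using A by (intro sets_PiM_I_finite) auto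
    have "gshift n h -` PiE ?I A \<inter> space (gauss_vec n) = PiE ?I (\<lambda>i. {x. x + h i \<in> A i})"
      unfolding gshift_def space_gauss_vec by (auto simp: PiE_def Pi_def extensional_def)
    then have "emeasure ?D (PiE ?I A) = emeasure (gauss_vec n) (PiE ?I (\<lambda>i. {x. x + h i \<in> A i}))"
      using AP by (subst emeasure_distr) auto
    also have "\<dots> = (\<Prod>i\<in>?I. emeasure std_gauss {x. x + h i \<in> A i})"
      unfolding gauss_vec_def
    proof (rule G.emeasure_PiM)
      fix i assume "i \<in> ?I"
      then have "A i \<in> sets borel" using A by simp
      then show "{x. x + h i \<in> A i} \<in> sets std_gauss" by measurable
    qed simp
    also have "\<dots> = (\<Prod>i\<in>?I. emeasure (?M i) (A i))"
      using A by (intro prod.cong refl eM[symmetric]) auto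
    finally show "emeasure ?D (PiE ?I A) = (\<Prod>i\<in>?I. emeasure (?M i) (A i))" .
  qed simp
  have 2: "?R = PiM ?I ?M"
  proof (rule P.PiM_eqI)
    show "sets ?R = sets (PiM ?I ?M)" using setsM by simp
    fix A assume A: "\<And>i. i \<in> ?I \<Longrightarrow> A i \<in> sets (?M i)"
    have AP: "PiE ?I A \<in> sets (gauss_vec n)"
      unfolding sets_gauss_vec using A by (intro sets_PiM_I_finite) auto
    define f where "f i x = ennreal (exp (h i * x - (h i)^2/2)) * indicator (A i) x" for i x
    have pw: "ennreal (exp ((\<Sum>i<n. h i * \<xi> i) - (\<Sum>i<n. (h i)^2) / 2)) * indicator (PiE ?I A) \<xi>
        = (\<Prod>i\<in>?I. f i (\<xi> i))" if "\<xi> \<in> space (gauss_vec n)" for \<xi>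
    proof -
      have "exp ((\<Sum>i<n. h i * \<xi> i) - (\<Sum>i<n. (h i)^2) / 2) = (\<Prod>i\<in>?I. exp (h i * \<xi> i - (h i)^2/2))"
        by (simp add: exp_sum[symmetric] sum_subtractf sum_divide_distrib)
      then have e: "ennreal (exp ((\<Sum>i<n. h i * \<xi> i) - (\<Sum>i<n. (h i)^2) / 2)) = (\<Prod>i\<in>?I. ennreal (exp (h i * \<xi> i - (h i)^2/2)))"
        by (simp add: prod_ennreal)
      have ind: "(indicator (PiE ?I A) \<xi> :: ennreal) = (\<Prod>i\<in>?I. indicator (A i) (\<xi> i))"
      proof (cases "\<forall>i\<in>?I. \<xi> i \<in> A i")
        case True
        then have "\<xi> \<in> PiE ?I A" using that unfolding space_gauss_vec by (auto simp: PiE_def Pi_def)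
        then show ?thesis using True by simp
      next
        case False
        then obtain i where i: "i \<in> ?I" "\<xi> i \<notin> A i" by auto
        then have "\<xi> \<notin> PiE ?I A" by auto
        moreover have "(\<Prod>i\<in>?I. (indicator (A i) (\<xi> i) :: ennreal)) = 0"
          using i by (intro prod_zero bexI[of _ i]) auto
        ultimately show ?thesis by simp
      qed
      show ?thesis unfolding e ind f_def by (simp add: prod.distrib)
    qed
    have "emeasure ?R (PiE ?I A) = (\<integral>\<^sup>+\<xi>. ennreal (exp ((\<Sum>i<n. h i * \<xi> i) - (\<Sum>i<n. (h i)^2) / 2)) * indicator (PiE ?I A) \<xi> \<partial>gauss_vec n)"
      using AP by (subst emeasure_density) auto
    also have "\<dots> = (\<integral>\<^sup>+\<xi>. (\<Prod>i\<in>?I. f i (\<xi> i)) \<partial>gauss_vec n)"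
      by (intro nn_integral_cong pw)
    also have "\<dots> = (\<Prod>i\<in>?I. integral\<^sup>N std_gauss (f i))"
      unfolding gauss_vec_def
    proof (rule G.product_nn_integral_prod)
      fix i assume "i \<in> ?I"
      then have [measurable]: "A i \<in> sets borel" using A by simp
      show "f i \<in> borel_measurable std_gauss" unfolding f_def by measurable
    qed simp
    also have "\<dots> = (\<Prod>i\<in>?I. emeasure (?M i) (A i))"
    proof (intro prod.cong refl)
      fix i assume "i \<in> ?I"
      then have [measurable]: "A i \<in> sets borel" using A by simp
      have "integral\<^sup>N std_gauss (f i) = emeasure (density std_gauss (\<lambda>x. ennreal (exp (h i * x - (h i)^2/2)))) (A i)"
        unfolding f_def by (subst emeasure_density) auto
      then show "integral\<^sup>N std_gauss (f i) = emeasure (?M i) (A i)"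
        by (simp add: std_gauss_shift)
    qed
    finally show "emeasure ?R (PiE ?I A) = (\<Prod>i\<in>?I. emeasure (?M i) (A i))" .
  qed simp
  show ?thesis using 1 2 by simp
qed

lemma gauss_vec_components_indep:
  assumes "n > 0"
  shows "prob_space.indep_vars (gauss_vec n) (\<lambda>_. borel) (\<lambda>i \<xi>. \<xi> i) {..<n}"
proof -
  interpret prob_space "gauss_vec n" by (rule gauss_vec_prob)
  interpret G: product_prob_space "\<lambda>_::nat. std_gauss"
    by (intro product_prob_spaceI std_gauss_prob)
  have rv: "random_variable borel (\<lambda>\<xi>. \<xi> i)" if "i \<in> {..<n}" for i
    using that unfolding gauss_vec_def by (simp add: measurable_cong_sets[OF refl sets_std_gauss[symmetric]])
  show ?thesis
  proof (subst indep_vars_iff_distr_eq_PiM'[OF _ rv])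
    show "{..<n} \<noteq> {}" using assms by auto
    have "distr (gauss_vec n) (PiM {..<n} (\<lambda>_. borel)) (\<lambda>x. restrict (\<lambda>i. x i) {..<n})
        = distr (gauss_vec n) (PiM {..<n} (\<lambda>_. borel)) (\<lambda>x. x)"
      by (rule distr_cong) (auto simp: space_gauss_vec)
    also have "\<dots> = gauss_vec n"
      by (rule distr_id2) (simp add: sets_gauss_vec)
    also have "\<dots> = PiM {..<n} (\<lambda>i. distr (gauss_vec n) borel (\<lambda>\<xi>. \<xi> i))"
      unfolding gauss_vec_def
    proof (rule PiM_cong[OF refl])
      fix i assume "i \<in> {..<n}"
      have "distr (PiM {..<n} (\<lambda>_. std_gauss)) borel (\<lambda>\<xi>. \<xi> i) = distr (PiM {..<n} (\<lambda>_. std_gauss)) std_gauss (\<lambda>\<xi>. \<xi> i)"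
        by (rule distr_cong) auto
      also have "\<dots> = std_gauss"
        using \<open>i \<in> {..<n}\<close> by (intro distr_PiM_component std_gauss_prob) auto
      finally show "std_gauss = distr (PiM {..<n} (\<lambda>_. std_gauss)) borel (\<lambda>\<xi>. \<xi> i)" by simp
    qed
    finally show "distr (gauss_vec n) (PiM {..<n} (\<lambda>_. borel)) (\<lambda>x. restrict (\<lambda>i. x i) {..<n})
        = PiM {..<n} (\<lambda>i. distr (gauss_vec n) borel (\<lambda>\<xi>. \<xi> i))" .
  qed
qed

lemma gauss_vec_component_normal:
  assumes "i < n"
  shows "distributed (gauss_vec n) lborel (\<lambda>\<xi>. \<xi> i) (normal_density 0 1)"
proof -
  interpret G: product_prob_space "\<lambda>_::nat. std_gauss"
    by (intro product_prob_spaceI std_gauss_prob)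
  have "distr (PiM {..<n} (\<lambda>_. std_gauss)) lborel (\<lambda>\<xi>. \<xi> i) = distr (PiM {..<n} (\<lambda>_. std_gauss)) std_gauss (\<lambda>\<xi>. \<xi> i)"
    by (rule distr_cong) auto
  also have "\<dots> = std_gauss"
    using assms by (intro distr_PiM_component std_gauss_prob) auto
  finally have d: "distr (gauss_vec n) lborel (\<lambda>\<xi>. \<xi> i) = density lborel (normal_density 0 1)"
    unfolding gauss_vec_def std_gauss_def .
  have m: "(\<lambda>\<xi>. \<xi> i) \<in> measurable (gauss_vec n) lborel"
    unfolding measurable_cong_sets[OF sets_gauss_vec sets_lborel] using assms by simp
  show ?thesis unfolding distributed_def using d m by simp
qed

lemma gauss_linear:
  assumes pos: "(\<Sum>i<n. (h i)^2) > 0"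
  shows "distr (gauss_vec n) lborel (\<lambda>\<xi>. \<Sum>i<n. h i * \<xi> i)
       = distr std_gauss lborel (\<lambda>e. sqrt (\<Sum>i<n. (h i)^2) * e)"
proof -
  interpret prob_space "gauss_vec n" by (rule gauss_vec_prob)
  define J where "J = {i. i < n \<and> h i \<noteq> 0}"
  have J: "finite J" "J \<subseteq> {..<n}" unfolding J_def by auto
  have "J \<noteq> {}"
  proof
    assume "J = {}"
    then have "(\<Sum>i<n. (h i)^2) = 0" unfolding J_def by (intro sum.neutral) auto
    with pos show False by simp
  qed
  then have "n > 0" using J by auto
  have ind: "indep_vars (\<lambda>_. borel) (\<lambda>i. (\<lambda>x. h i * x) \<circ> (\<lambda>\<xi>. \<xi> i)) J"
    by (rule indep_vars_compose[OF indep_vars_subset[OF gauss_vec_components_indep[OF \<open>n > 0\<close>] J(2)]]) auto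
  have nd: "distributed (gauss_vec n) lborel (((\<lambda>x. h i * x) \<circ> (\<lambda>\<xi>. \<xi> i))) (normal_density 0 \<bar>h i\<bar>)"
    if "i \<in> J" for i
  proof -
    have "i < n" "h i \<noteq> 0" using that unfolding J_def by auto
    from normal_density_affine[OF gauss_vec_component_normal[OF \<open>i < n\<close>], of "h i" 0] \<open>h i \<noteq> 0\<close>
    show ?thesis by (simp add: o_def)
  qed
  have posJ: "\<And>i. i \<in> J \<Longrightarrow> 0 < \<bar>h i\<bar>" unfolding J_def by auto
  have "distributed (gauss_vec n) lborel (\<lambda>x. \<Sum>i\<in>J. ((\<lambda>x. h i * x) \<circ> (\<lambda>\<xi>. \<xi> i)) x) (normal_density (\<Sum>i\<in>J. 0) (sqrt (\<Sum>i\<in>J. \<bar>h i\<bar>\<^sup>2)))"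
    by (rule sum_indep_normal[OF J(1) \<open>J \<noteq> {}\<close> ind posJ nd])
  then have "distributed (gauss_vec n) lborel (\<lambda>x. \<Sum>i\<in>J. h i * x i) (normal_density 0 (sqrt (\<Sum>i\<in>J. \<bar>h i\<bar>\<^sup>2)))"
    by (simp only: o_def sum.neutral_const)
  moreover have "(\<Sum>i\<in>J. h i * x i) = (\<Sum>i<n. h i * x i)" for x
    using J by (intro sum.mono_neutral_left) (auto simp: J_def)
  moreover have "(\<Sum>i\<in>J. \<bar>h i\<bar>\<^sup>2) = (\<Sum>i<n. (h i)^2)"
    unfolding power2_abs using J by (intro sum.mono_neutral_left) (auto simp: J_def)
  ultimately have 1: "distributed (gauss_vec n) lborel (\<lambda>x. \<Sum>i<n. h i * x i) (normal_density 0 (sqrt (\<Sum>i<n. (h i)^2)))"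
    by (simp only:)
  interpret S: prob_space std_gauss by (rule std_gauss_prob)
  have "distributed std_gauss lborel (\<lambda>x. x) (normal_density 0 1)"
    unfolding distributed_def std_gauss_def by (auto simp: distr_id2)
  from S.normal_density_affine[OF this, of "sqrt (\<Sum>i<n. (h i)^2)" 0] pos
  have 2: "distributed std_gauss lborel (\<lambda>e. sqrt (\<Sum>i<n. (h i)^2) * e) (normal_density 0 (sqrt (\<Sum>i<n. (h i)^2)))"
    by simp
  from 1 2 show ?thesis unfolding distributed_def by (metis (no_types, lifting))
qed

lemma gauss_linear_measure:
  assumes pos: "(\<Sum>i<n. (h i)^2) > 0" and B: "B \<in> sets borel"
  shows "measure (gauss_vec n) {\<xi> \<in> space (gauss_vec n). (\<Sum>i<n. h i * \<xi> i) \<in> B}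
       = measure std_gauss {e. sqrt (\<Sum>i<n. (h i)^2) * e \<in> B}"
proof -
  have m1: "(\<lambda>\<xi>. \<Sum>i<n. h i * \<xi> i) \<in> measurable (gauss_vec n) lborel"
    unfolding measurable_cong_sets[OF sets_gauss_vec sets_lborel] by simp
  have m2: "(\<lambda>e. sqrt (\<Sum>i<n. (h i)^2) * e) \<in> measurable std_gauss lborel"
    unfolding measurable_cong_sets[OF sets_std_gauss sets_lborel] by simp
  have B': "B \<in> sets lborel" using B by simp
  have "measure (gauss_vec n) {\<xi> \<in> space (gauss_vec n). (\<Sum>i<n. h i * \<xi> i) \<in> B}
      = measure (distr (gauss_vec n) lborel (\<lambda>\<xi>. \<Sum>i<n. h i * \<xi> i)) B"
    by (subst measure_distr[OF m1 B']) (auto simp: vimage_def Int_def conj_commute)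
  also have "\<dots> = measure (distr std_gauss lborel (\<lambda>e. sqrt (\<Sum>i<n. (h i)^2) * e)) B"
    by (simp add: gauss_linear[OF pos])
  also have "\<dots> = measure std_gauss {e. sqrt (\<Sum>i<n. (h i)^2) * e \<in> B}"
    by (subst measure_distr[OF m2 B']) (auto simp: vimage_def)
  finally show ?thesis .
qed

lemma std_gauss_ge_gt:
  assumes "r > 0"
  shows "measure std_gauss {e. r * e \<ge> k} \<le> measure std_gauss {e. r * e > k}"
proof -
  interpret S: prob_space std_gauss by (rule std_gauss_prob)
  have "{e. r * e \<ge> k} \<subseteq> {e. r * e > k} \<union> {k / r}"
    using assms by (auto simp: field_simps)
  then have "measure std_gauss {e. r * e \<ge> k} \<le> measure std_gauss ({e. r * e > k} \<union> {k / r})"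
    by (intro S.finite_measure_mono) auto
  also have "\<dots> \<le> measure std_gauss {e. r * e > k} + measure std_gauss {k / r}"
    by (intro measure_subadditive) auto
  also have "measure std_gauss {k / r} = 0"
    using std_gauss_singleton[of "k / r"] by (simp add: measure_def)
  finally show ?thesis by simp
qed

lemma change_of_measure:
  assumes B: "B \<in> sets (gauss_vec n)"
  shows "emeasure (gauss_vec n) {\<xi> \<in> space (gauss_vec n). gshift n h \<xi> \<in> B}
    = (\<integral>\<^sup>+\<xi>. ennreal (exp ((\<Sum>i<n. h i * \<xi> i) - (\<Sum>i<n. (h i)^2) / 2)) * indicator B \<xi> \<partial>gauss_vec n)"
proof -
  have "emeasure (gauss_vec n) {\<xi> \<in> space (gauss_vec n). gshift n h \<xi> \<in> B}
     = emeasure (distr (gauss_vec n) (gauss_vec n) (gshift n h)) B"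
    using B by (subst emeasure_distr) (auto simp: vimage_def Int_def conj_commute)
  also have "\<dots> = (\<integral>\<^sup>+\<xi>. ennreal (exp ((\<Sum>i<n. h i * \<xi> i) - (\<Sum>i<n. (h i)^2) / 2)) * indicator B \<xi> \<partial>gauss_vec n)"
    unfolding gauss_shift using B by (subst emeasure_density) auto
  finally show ?thesis .
qed

lemma ennreal_lin:
  fixes x y a b :: real
  assumes "0 \<le> x" "0 \<le> y" "0 \<le> a" "0 \<le> b"
  shows "ennreal (x*a + y*b) = ennreal x * ennreal a + ennreal y * ennreal b"
  using assms by (subst ennreal_plus) (auto simp: ennreal_mult)

lemma bayes_gauss:
  fixes n :: nat and h :: "nat \<Rightarrow> real" and \<pi> :: real and A
  assumes pos: "(\<Sum>i<n. (h i)^2) > 0" and \<pi>: "0 < \<pi>" "\<pi> < 1" and A: "A \<in> sets (gauss_vec n)"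
  defines "r \<equiv> sqrt (\<Sum>i<n. (h i)^2)"
  defines "c \<equiv> r^2/2 + ln ((1-\<pi>)/\<pi>)"
  shows "(1-\<pi>) * measure std_gauss {e. r*e \<ge> c} + \<pi> * measure std_gauss {e. r*e \<ge> r^2 - c}
     \<le> (1-\<pi>) * measure (gauss_vec n) A + \<pi> * measure (gauss_vec n) {\<xi> \<in> space (gauss_vec n). gshift n h \<xi> \<notin> A}"
proof -
  interpret prob_space "gauss_vec n" by (rule gauss_vec_prob)
  define sp where "sp = space (gauss_vec n)"
  define Z where "Z \<xi> = (\<Sum>i<n. h i * \<xi> i)" for \<xi> :: "nat \<Rightarrow> real"
  define L where "L \<xi> = exp (Z \<xi> - (\<Sum>i<n. (h i)^2) / 2)" for \<xi>
  have Lnn: "L \<xi> \<ge> 0" for \<xi> unfolding L_def by simp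
  define F where "F B \<xi> = (1-\<pi>) * indicator B \<xi> + \<pi> * L \<xi> * indicator (sp - B) \<xi>" for B \<xi>
  have r2: "r^2 = (\<Sum>i<n. (h i)^2)" unfolding r_def using pos by simp
  have rpos: "r > 0" unfolding r_def using pos by simp
  have [measurable]: "Z \<in> borel_measurable (gauss_vec n)"
    unfolding Z_def measurable_cong_sets[OF sets_gauss_vec refl] by simp
  have [measurable]: "L \<in> borel_measurable (gauss_vec n)" unfolding L_def by measurable
  have Fint: "(\<integral>\<^sup>+\<xi>. ennreal (F B \<xi>) \<partial>gauss_vec n)
     = ennreal ((1-\<pi>) * measure (gauss_vec n) B + \<pi> * measure (gauss_vec n) {\<xi> \<in> sp. gshift n h \<xi> \<notin> B})"
    if B[measurable]: "B \<in> sets (gauss_vec n)" for B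
  proof -
    have spB[measurable]: "sp - B \<in> sets (gauss_vec n)" unfolding sp_def using B by auto
    have pw: "ennreal (F B \<xi>) = ennreal (1-\<pi>) * indicator B \<xi> + ennreal \<pi> * (ennreal (L \<xi>) * indicator (sp - B) \<xi>)" for \<xi>
    proof (cases "\<xi> \<in> B")
      case True then show ?thesis by (simp add: F_def)
    next
      case False
      show ?thesis
      proof (cases "\<xi> \<in> sp")
        case True
        with False show ?thesis using \<pi> Lnn[of \<xi>] by (simp add: F_def ennreal_mult)
      next
        case False
        with \<open>\<xi> \<notin> B\<close> show ?thesis by (simp add: F_def)
      qed
    qed
    have "(\<integral>\<^sup>+\<xi>. ennreal (F B \<xi>) \<partial>gauss_vec n)
       = ennreal (1-\<pi>) * emeasure (gauss_vec n) B + ennreal \<pi> * (\<integral>\<^sup>+\<xi>. ennreal (L \<xi>) * indicator (sp - B) \<xi> \<partial>gauss_vec n)"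
      unfolding pw by (subst nn_integral_add) (auto simp: nn_integral_cmult)
    also have "(\<integral>\<^sup>+\<xi>. ennreal (L \<xi>) * indicator (sp - B) \<xi> \<partial>gauss_vec n) = emeasure (gauss_vec n) {\<xi> \<in> sp. gshift n h \<xi> \<in> sp - B}"
      unfolding L_def Z_def sp_def by (rule change_of_measure[symmetric]) (use spB in \<open>simp add: sp_def\<close>)
    also have "{\<xi> \<in> sp. gshift n h \<xi> \<in> sp - B} = {\<xi> \<in> sp. gshift n h \<xi> \<notin> B}"
      unfolding sp_def using shift_space by auto
    also have "{\<xi> \<in> sp. gshift n h \<xi> \<notin> B} \<in> sets (gauss_vec n)"
      unfolding sp_def by measurable
    then have "emeasure (gauss_vec n) {\<xi> \<in> sp. gshift n h \<xi> \<notin> B} = ennreal (measure (gauss_vec n) {\<xi> \<in> sp. gshift n h \<xi> \<notin> B})"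
      by (simp add: emeasure_eq_measure)
    finally show ?thesis using \<pi>
      by (simp add: emeasure_eq_measure ennreal_mult)
  qed
  define As where "As = {\<xi> \<in> sp. c \<le> Z \<xi>}"
  have As[measurable]: "As \<in> sets (gauss_vec n)" unfolding As_def sp_def by measurable
  have key: "\<xi> \<in> As \<longleftrightarrow> 1 - \<pi> \<le> \<pi> * L \<xi>" if "\<xi> \<in> sp" for \<xi>
  proof -
    have q: "(1-\<pi>)/\<pi> > 0" using \<pi> by simp
    have "c \<le> Z \<xi> \<longleftrightarrow> ln ((1-\<pi>)/\<pi>) \<le> Z \<xi> - (\<Sum>i<n. (h i)^2) / 2"
      unfolding c_def r2 by linarith
    also have "\<dots> \<longleftrightarrow> exp (ln ((1-\<pi>)/\<pi>)) \<le> L \<xi>" unfolding L_def by (rule exp_le_cancel_iff[symmetric])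
    also have "\<dots> \<longleftrightarrow> (1-\<pi>)/\<pi> \<le> L \<xi>" using q by simp
    also have "\<dots> \<longleftrightarrow> 1 - \<pi> \<le> \<pi> * L \<xi>" using \<pi> by (simp add: divide_le_eq mult.commute)
    finally show ?thesis unfolding As_def using that by simp
  qed
  have pw: "F As \<xi> \<le> F A \<xi>" if "\<xi> \<in> sp" for \<xi>
  proof (cases "\<xi> \<in> As")
    case True
    then have "1 - \<pi> \<le> \<pi> * L \<xi>" using key that by simp
    then show ?thesis unfolding F_def using True that by (auto simp: indicator_def)
  next
    case False
    then have "\<pi> * L \<xi> < 1 - \<pi>" using key that by simp
    then show ?thesis unfolding F_def using False that by (auto simp: indicator_def)
  qed
  have "ennreal ((1-\<pi>) * measure (gauss_vec n) As + \<pi> * measure (gauss_vec n) {\<xi> \<in> sp. gshift n h \<xi> \<notin> As})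
     \<le> ennreal ((1-\<pi>) * measure (gauss_vec n) A + \<pi> * measure (gauss_vec n) {\<xi> \<in> sp. gshift n h \<xi> \<notin> A})"
    unfolding Fint[OF As, symmetric] Fint[OF A, symmetric]
    by (intro nn_integral_mono ennreal_leI pw) (simp add: sp_def)
  then have main: "(1-\<pi>) * measure (gauss_vec n) As + \<pi> * measure (gauss_vec n) {\<xi> \<in> sp. gshift n h \<xi> \<notin> As}
     \<le> (1-\<pi>) * measure (gauss_vec n) A + \<pi> * measure (gauss_vec n) {\<xi> \<in> sp. gshift n h \<xi> \<notin> A}"
    using \<pi> by (subst (asm) ennreal_le_iff) (auto intro!: add_nonneg_nonneg mult_nonneg_nonneg)
  have m1: "measure (gauss_vec n) As = measure std_gauss {e. r*e \<ge> c}"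
  proof -
    have "As = {\<xi> \<in> space (gauss_vec n). (\<Sum>i<n. h i * \<xi> i) \<in> {c..}}"
      unfolding As_def sp_def Z_def by auto
    then show ?thesis using gauss_linear_measure[OF pos, of "{c..}"] unfolding r_def by simp
  qed
  have m2: "measure (gauss_vec n) {\<xi> \<in> sp. gshift n h \<xi> \<notin> As} \<ge> measure std_gauss {e. r*e \<ge> r^2 - c}"
  proof -
    have Zs: "Z (gshift n h \<xi>) = Z \<xi> + r^2" for \<xi>
      unfolding Z_def gshift_def r2 by (simp add: sum.distrib distrib_left power2_eq_square)
    have "{\<xi> \<in> sp. gshift n h \<xi> \<notin> As} = {\<xi> \<in> space (gauss_vec n). (\<Sum>i<n. (- h i) * \<xi> i) \<in> {r^2 - c<..}}"
      unfolding As_def sp_def using shift_space[of n h] Zs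
      by (auto simp: Z_def sum_negf)
    moreover have "(\<Sum>i<n. (- h i)^2) = (\<Sum>i<n. (h i)^2)" by simp
    ultimately have "measure (gauss_vec n) {\<xi> \<in> sp. gshift n h \<xi> \<notin> As} = measure std_gauss {e. r * e > r^2 - c}"
      using gauss_linear_measure[where n=n and h="\<lambda>i. - h i" and B="{r^2 - c<..}"] pos unfolding r_def by simp
    then show ?thesis using std_gauss_ge_gt[OF rpos] by simp
  qed
  have "(1-\<pi>) * measure std_gauss {e. r*e \<ge> c} + \<pi> * measure std_gauss {e. r*e \<ge> r^2 - c}
      \<le> (1-\<pi>) * measure (gauss_vec n) As + \<pi> * measure (gauss_vec n) {\<xi> \<in> sp. gshift n h \<xi> \<notin> As}"
    unfolding m1 using m2 \<pi> by (intro add_left_mono mult_left_mono) auto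
  with main show ?thesis unfolding sp_def by linarith
qed

definition psij :: "nat \<Rightarrow> nat \<Rightarrow> nat \<Rightarrow> real \<Rightarrow> real \<Rightarrow> (nat \<Rightarrow> nat \<Rightarrow> real) \<Rightarrow> nat \<Rightarrow> real" where
  "psij n p s a \<sigma> X j =
      (real s / real p) * measure std_gauss
          {e. \<sigma> * e \<ge> (a - tj n p s a \<sigma> X j) * sqrt (colnorm2 n X j)}
    + (1 - real s / real p) * measure std_gauss
          {e. \<sigma> * e \<ge> tj n p s a \<sigma> X j * sqrt (colnorm2 n X j)}"

lemma Psi_psij: "Psi n p s a \<sigma> X = (\<Sum>j<p. psij n p s a \<sigma> X j)"
  unfolding Psi_def psij_def ..

lemma psij_bound:
  assumes \<sigma>: "\<sigma> > 0" and a: "a > 0" and sp: "0 < s" "s < p" and cn: "colnorm2 n X j \<noteq> 0"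
    and A: "A \<in> sets (gauss_vec n)"
  shows "psij n p s a \<sigma> X j \<le> (1 - real s / real p) * measure (gauss_vec n) A
     + (real s / real p) * measure (gauss_vec n) {\<xi> \<in> space (gauss_vec n). gshift n (\<lambda>i. a * X i j / \<sigma>) \<xi> \<notin> A}"
proof -
  define \<pi> where "\<pi> = real s / real p"
  define h where "h = (\<lambda>i. a * X i j / \<sigma>)"
  define k where "k = sqrt (colnorm2 n X j)"
  define L where "L = ln (real p / real s - 1)"
  have cnpos: "colnorm2 n X j > 0"
    using cn unfolding colnorm2_def by (metis sum_nonneg zero_le_power2 order_le_less)
  have kpos: "k > 0" unfolding k_def using cnpos by simp
  have k2: "k^2 = colnorm2 n X j" unfolding k_def using cnpos by simp
  have \<pi>: "0 < \<pi>" "\<pi> < 1" unfolding \<pi>_def using sp by auto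
  have hs: "(\<Sum>i<n. (h i)^2) = (a / \<sigma>)^2 * colnorm2 n X j"
    unfolding h_def colnorm2_def by (simp add: sum_distrib_left power_mult_distrib power_divide sum_divide_distrib)
  have pos: "(\<Sum>i<n. (h i)^2) > 0" unfolding hs using cnpos a \<sigma> by simp
  define r where "r = sqrt (\<Sum>i<n. (h i)^2)"
  have r: "r = a * k / \<sigma>" unfolding r_def hs k_def using a \<sigma> cnpos
    by (simp add: real_sqrt_mult)
  have Lq: "ln ((1-\<pi>)/\<pi>) = L"
  proof -
    have "(1-\<pi>)/\<pi> = real p / real s - 1" unfolding \<pi>_def using sp by (simp add: field_simps)
    then show ?thesis unfolding L_def by simp
  qed
  define c where "c = r^2/2 + ln ((1-\<pi>)/\<pi>)"
  have tj: "tj n p s a \<sigma> X j = a/2 + \<sigma>^2 * L / (a * k^2)"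
    unfolding tj_def L_def k2 ..
  have fac: "\<sigma>^2 / (a * k) > 0" using \<sigma> a kpos by simp
  have e1: "c * (\<sigma>^2 / (a * k)) = tj n p s a \<sigma> X j * k"
    unfolding c_def Lq tj r using \<sigma> a kpos by (simp add: field_simps power2_eq_square)
  have e2: "(r^2 - c) * (\<sigma>^2 / (a * k)) = (a - tj n p s a \<sigma> X j) * k"
    unfolding c_def Lq tj r using \<sigma> a kpos by (simp add: field_simps power2_eq_square)
  have e3: "r * e * (\<sigma>^2 / (a * k)) = \<sigma> * e" for e
    unfolding r using \<sigma> a kpos by (simp add: field_simps power2_eq_square)
  have s1: "{e. r*e \<ge> c} = {e. \<sigma> * e \<ge> tj n p s a \<sigma> X j * k}"
  proof -
    have "r*e \<ge> c \<longleftrightarrow> c * (\<sigma>^2 / (a * k)) \<le> r * e * (\<sigma>^2 / (a * k))" for e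
      by (rule mult_le_cancel_right_pos[OF fac, symmetric])
    then show ?thesis unfolding e1 e3 by simp
  qed
  have s2: "{e. r*e \<ge> r^2 - c} = {e. \<sigma> * e \<ge> (a - tj n p s a \<sigma> X j) * k}"
  proof -
    have "r*e \<ge> r^2 - c \<longleftrightarrow> (r^2 - c) * (\<sigma>^2 / (a * k)) \<le> r * e * (\<sigma>^2 / (a * k))" for e
      by (rule mult_le_cancel_right_pos[OF fac, symmetric])
    then show ?thesis unfolding e2 e3 by simp
  qed
  have "psij n p s a \<sigma> X j = (1-\<pi>) * measure std_gauss {e. r*e \<ge> c} + \<pi> * measure std_gauss {e. r*e \<ge> r^2 - c}"
    unfolding psij_def s1 s2 \<pi>_def k_def by simp
  also have "\<dots> \<le> (1-\<pi>) * measure (gauss_vec n) A + \<pi> * measure (gauss_vec n) {\<xi> \<in> space (gauss_vec n). gshift n h \<xi> \<notin> A}"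
    using bayes_gauss[OF pos \<pi> A] unfolding r_def[symmetric] c_def[symmetric] .
  finally show ?thesis unfolding \<pi>_def h_def .
qed

lemma psij_nonneg:
  assumes "s \<le> p" shows "psij n p s a \<sigma> X j \<ge> 0"
proof -
  have "real s / real p \<le> 1" using assms by (cases "p = 0") (auto simp: divide_le_eq_1)
  then show ?thesis unfolding psij_def by (intro add_nonneg_nonneg mult_nonneg_nonneg) auto
qed

lemma psij_le:
  assumes \<sigma>: "\<sigma> > 0" and a: "a > 0" and sp: "0 < s" "s < p" and cn: "colnorm2 n X j \<noteq> 0"
  shows "psij n p s a \<sigma> X j \<le> real s / real p"
proof -
  interpret prob_space "gauss_vec n" by (rule gauss_vec_prob)
  have "psij n p s a \<sigma> X j \<le> (1 - real s / real p) * measure (gauss_vec n) {}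
     + (real s / real p) * measure (gauss_vec n) {\<xi> \<in> space (gauss_vec n). gshift n (\<lambda>i. a * X i j / \<sigma>) \<xi> \<notin> {}}"
    by (rule psij_bound[OF assms]) simp
  also have "\<dots> = real s / real p" by (simp add: prob_space)
  finally show ?thesis .
qed

lemma ln_bound:
  fixes x :: real assumes "0 < x" "x \<le> 1"
  shows "ln x + (1 - x) + (1 - x)^2 / 2 \<le> 0"
proof -
  let ?f = "\<lambda>x::real. ln x + (1 - x) + (1 - x)^2 / 2"
  have "?f x \<le> ?f 1"
  proof (rule DERIV_nonneg_imp_nondecreasing[OF assms(2)])
    fix y :: real assume y: "x \<le> y" "y \<le> 1"
    then have yp: "y > 0" using assms by simp
    have "(?f has_real_derivative (1 / y - 1 - (1 - y))) (at y)"
      using yp by (auto intro!: derivative_eq_intros simp: power2_eq_square field_simps)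
    moreover have "1 / y - 1 - (1 - y) = (1 - y)^2 / y"
      using yp by (simp add: field_simps power2_eq_square)
    moreover have "(1 - y)^2 / y \<ge> 0" using yp by simp
    ultimately show "\<exists>d. (?f has_real_derivative d) (at y) \<and> 0 \<le> d" by auto
  qed
  then show ?thesis by simp
qed

lemma weight_sum:
  fixes \<pi> :: real assumes "finite Q"
  shows "(\<Sum>T\<in>Pow Q. \<pi> ^ card T * (1 - \<pi>) ^ (card Q - card T)) = 1"
proof -
  have "(\<Prod>x\<in>Q. \<pi> + (1 - \<pi>)) = (\<Sum>T\<in>Pow Q. (\<Prod>x\<in>T. \<pi>) * (\<Prod>x\<in>Q - T. 1 - \<pi>))"
    by (rule prod_add[OF assms])
  also have "\<dots> = (\<Sum>T\<in>Pow Q. \<pi> ^ card T * (1 - \<pi>) ^ (card Q - card T))"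
    using assms by (intro sum.cong refl) (auto simp: card_Diff_subset finite_subset)
  finally show ?thesis by simp
qed

lemma chernoff:
  fixes s :: nat and s' \<pi> :: real
  assumes Q: "finite Q" and s': "0 < s'" "s' < real s" and \<pi>: "0 < \<pi>" "\<pi> < 1"
    and m: "real (card Q) * \<pi> \<le> s'"
  shows "(\<Sum>T\<in>{T\<in>Pow Q. s \<le> card T}. \<pi> ^ card T * (1 - \<pi>) ^ (card Q - card T))
     \<le> exp (- ((real s - s')^2) / (2 * real s))"
proof -
  define u where "u = real s / s'"
  have u1: "u > 1" unfolding u_def using s' by simp
  define w where "w T = \<pi> ^ card T * (1 - \<pi>) ^ (card Q - card T)" for T :: "'a set"
  have wnn: "w T \<ge> 0" for T unfolding w_def using \<pi> by simp
  have "(\<Sum>T\<in>{T\<in>Pow Q. s \<le> card T}. w T) \<le> (\<Sum>T\<in>{T\<in>Pow Q. s \<le> card T}. w T * (u ^ card T / u ^ s))"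
  proof (intro sum_mono)
    fix T assume "T \<in> {T\<in>Pow Q. s \<le> card T}"
    then have "u ^ s \<le> u ^ card T" using u1 by (intro power_increasing) auto
    then have "1 \<le> u ^ card T / u ^ s" using u1 by simp
    then show "w T \<le> w T * (u ^ card T / u ^ s)" using wnn[of T]
      by (metis mult_le_cancel_left1 order_le_less not_le mult_nonneg_nonneg)
  qed
  also have "\<dots> \<le> (\<Sum>T\<in>Pow Q. w T * (u ^ card T / u ^ s))"
    using Q u1 wnn by (intro sum_mono2) (auto intro!: mult_nonneg_nonneg)
  also have "\<dots> = (\<Sum>T\<in>Pow Q. (\<pi> * u) ^ card T * (1 - \<pi>) ^ (card Q - card T)) / u ^ s"
    unfolding w_def by (simp add: sum_divide_distrib power_mult_distrib mult_ac)
  also have "(\<Sum>T\<in>Pow Q. (\<pi> * u) ^ card T * (1 - \<pi>) ^ (card Q - card T)) = (\<pi> * u + (1 - \<pi>)) ^ card Q"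
  proof -
    have "(\<Prod>x\<in>Q. \<pi> * u + (1 - \<pi>)) = (\<Sum>T\<in>Pow Q. (\<Prod>x\<in>T. \<pi> * u) * (\<Prod>x\<in>Q - T. 1 - \<pi>))"
      by (rule prod_add[OF Q])
    also have "\<dots> = (\<Sum>T\<in>Pow Q. (\<pi> * u) ^ card T * (1 - \<pi>) ^ (card Q - card T))"
      using Q by (intro sum.cong refl) (auto simp: card_Diff_subset finite_subset)
    finally show ?thesis by simp
  qed
  also have "(\<pi> * u + (1 - \<pi>)) ^ card Q \<le> exp (\<pi> * (u - 1)) ^ card Q"
  proof (rule power_mono)
    show "\<pi> * u + (1 - \<pi>) \<le> exp (\<pi> * (u - 1))"
      using exp_ge_add_one_self[of "\<pi> * (u - 1)"] by (simp add: algebra_simps)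
    show "0 \<le> \<pi> * u + (1 - \<pi>)" using \<pi> u1 by simp
  qed
  also have "exp (\<pi> * (u - 1)) ^ card Q = exp (real (card Q) * \<pi> * (u - 1))"
    by (simp add: exp_of_nat_mult[symmetric] mult_ac)
  also have "\<dots> \<le> exp (s' * (u - 1))"
    using m u1 by (intro exp_mono mult_right_mono) auto
  finally have 1: "(\<Sum>T\<in>{T\<in>Pow Q. s \<le> card T}. w T) \<le> exp (s' * (u - 1)) / u ^ s"
    using u1 by (simp add: divide_right_mono)
  have ea: "s' * (u - 1) = real s - s'" using s' by (simp add: u_def field_simps)
  have eb: "u ^ s = exp (real s * ln u)" using u1 by (simp add: exp_of_nat_mult)
  have "exp (s' * (u - 1)) / u ^ s = exp (real s - s' - real s * ln u)"
    unfolding ea eb by (simp add: exp_diff)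
  also have "\<dots> \<le> exp (- ((real s - s')^2) / (2 * real s))"
  proof (rule exp_mono)
    define x where "x = s' / real s"
    have x: "0 < x" "x \<le> 1" unfolding x_def using s' by auto
    have lnu: "ln u = - ln x" unfolding u_def x_def using s' by (simp add: ln_div)
    have "real s * (ln x + (1 - x) + (1 - x)^2 / 2) \<le> 0"
      using ln_bound[OF x] s' by (simp add: mult_nonneg_nonpos)
    moreover have "real s * (1 - x) = real s - s'" unfolding x_def using s' by (simp add: field_simps)
    moreover have "real s * ((1 - x)^2 / 2) = (real s - s')^2 / (2 * real s)"
      unfolding x_def using s' by (simp add: field_simps power2_eq_square)
    ultimately show "real s - s' - real s * ln u \<le> - ((real s - s')^2) / (2 * real s)"
      unfolding lnu by (simp add: algebra_simps)
  qed
  finally show ?thesis using 1 unfolding w_def by simp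
qed

definition bvec :: "real \<Rightarrow> nat set \<Rightarrow> nat \<Rightarrow> real" where
  "bvec a S i = (if i \<in> S then a else 0)"

lemma obs_measurable[measurable]:
  "obs n p X \<sigma> \<beta> \<in> measurable (gauss_vec n) (PiM {..<n} (\<lambda>_. borel))"
  unfolding obs_def measurable_cong_sets[OF sets_gauss_vec refl]
  by (intro measurable_restrict) simp

lemma obs_shift:
  assumes "j < p" "j \<notin> T" "\<sigma> > 0"
  shows "obs n p X \<sigma> (bvec a (insert j T)) \<xi> = obs n p X \<sigma> (bvec a T) (gshift n (\<lambda>i. a * X i j / \<sigma>) \<xi>)"
proof -
  have "(\<Sum>k<p. X i k * bvec a (insert j T) k) = (\<Sum>k<p. X i k * bvec a T k) + a * X i j" for i
  proof -
    have "(\<Sum>k<p. X i k * bvec a (insert j T) k) = (\<Sum>k<p. X i k * bvec a T k + (if k = j then a * X i j else 0))"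
      using assms by (intro sum.cong refl) (auto simp: bvec_def)
    also have "\<dots> = (\<Sum>k<p. X i k * bvec a T k) + a * X i j"
      using assms by (simp add: sum.distrib)
    finally show ?thesis .
  qed
  then show ?thesis
    unfolding obs_def gshift_def using assms by (auto simp: restrict_def field_simps intro!: ext)
qed

lemma bvec_Omega:
  assumes "S \<subseteq> {..<p}" "card S \<le> s" "a > 0"
  shows "bvec a S \<in> Omega p s a"
proof -
  have "{i. i < p \<and> bvec a S i \<noteq> 0} = S" using assms by (auto simp: bvec_def)
  then show ?thesis using assms unfolding Omega_def l0_def by (auto simp: bvec_def)
qed

lemma loss_lower:
  assumes "a > 0" "q \<ge> 1"
  shows "(a/2) powr q * (\<Sum>j<p. indicator {y. (a/2 \<le> est y j) \<noteq> (j \<in> S)} y)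
     \<le> lq_pow p q (\<lambda>i. est y i - bvec a S i)"
  unfolding lq_pow_def sum_distrib_left
proof (intro sum_mono)
  fix j assume "j \<in> {..<p}"
  show "(a/2) powr q * indicator {y. (a/2 \<le> est y j) \<noteq> (j \<in> S)} y \<le> \<bar>est y j - bvec a S j\<bar> powr q"
  proof (cases "(a/2 \<le> est y j) \<noteq> (j \<in> S)")
    case True
    have "a/2 \<le> \<bar>est y j - bvec a S j\<bar>"
      using True assms by (cases "j \<in> S") (auto simp: bvec_def)
    then have "(a/2) powr q \<le> \<bar>est y j - bvec a S j\<bar> powr q"
      using assms by (intro powr_mono2) auto
    then show ?thesis using True by simp
  next
    case False then show ?thesis by simp
  qed
qed

lemma coord_sum:
  fixes est :: "(nat \<Rightarrow> real) \<Rightarrow> (nat \<Rightarrow> real)"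
  assumes \<sigma>: "\<sigma> > 0" and a: "a > 0" and sp: "s < p" and cn: "colnorm2 n X j \<noteq> 0" and j: "j < p"
    and est: "(\<lambda>y. est y j) \<in> borel_measurable (PiM {..<n} (\<lambda>_. borel))"
    and s': "0 < s'" "s' < real s"
  defines "\<pi> \<equiv> s' / real p"
  defines "Err \<equiv> \<lambda>S. {\<xi> \<in> space (gauss_vec n). (a/2 \<le> est (obs n p X \<sigma> (bvec a S) \<xi>) j) \<noteq> (j \<in> S)}"
  defines "Good \<equiv> {S \<in> Pow {..<p}. card S \<le> s}"
  shows "(s' / real s) * psij n p s a \<sigma> X j * (1 - exp (- ((real s - s')^2) / (2 * real s)))
     \<le> (\<Sum>S\<in>Good. \<pi> ^ card S * (1 - \<pi>) ^ (p - card S) * measure (gauss_vec n) (Err S))"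
proof -
  interpret prob_space "gauss_vec n" by (rule gauss_vec_prob)
  have s0: "0 < s" using s' by simp
  define \<pi>0 where "\<pi>0 = real s / real p"
  have \<pi>: "0 < \<pi>" "\<pi> < \<pi>0" "\<pi>0 < 1" unfolding \<pi>_def \<pi>0_def using s' sp s0
    by (auto simp: divide_strict_right_mono)
  have rat: "\<pi> / \<pi>0 = s' / real s" unfolding \<pi>_def \<pi>0_def using sp s0 by simp
  define E where "E = exp (- ((real s - s')^2) / (2 * real s))"
  define w where "w S = \<pi> ^ card S * (1 - \<pi>) ^ (p - card S)" for S :: "nat set"
  define w' where "w' T = \<pi> ^ card T * (1 - \<pi>) ^ (card ({..<p} - {j}) - card T)" for T :: "nat set"
  define Q where "Q = {..<p} - {j}"
  have cardQ: "card Q = p - 1" unfolding Q_def using j by simp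
  define Gj where "Gj = {T \<in> Pow Q. card T < s}"
  have finQ: "finite Q" unfolding Q_def by simp
  have finGj: "finite Gj" unfolding Gj_def using finQ by simp
  have jT: "j \<notin> T" "T \<subseteq> {..<p}" "card T < s" "card T \<le> p - 1" if "T \<in> Gj" for T
  proof -
    show "j \<notin> T" "T \<subseteq> {..<p}" "card T < s" using that unfolding Gj_def Q_def by auto
    have "card T \<le> card Q" using that finQ unfolding Gj_def by (auto intro: card_mono)
    then show "card T \<le> p - 1" using cardQ by simp
  qed
  define f where "f S = w S * measure (gauss_vec n) (Err S)" for S
  have fnn: "f S \<ge> 0" for S unfolding f_def w_def using \<pi> by simp
  have inj: "inj_on (insert j) Gj"
    by (rule inj_onI) (metis jT(1) insert_ident)
  have disj: "Gj \<inter> insert j ` Gj = {}" using jT(1) by auto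
  have sub: "Gj \<union> insert j ` Gj \<subseteq> Good"
  proof -
    have "insert j T \<in> Good" if "T \<in> Gj" for T
    proof -
      have "finite T" using jT(2)[OF that] finite_subset by blast
      then show ?thesis unfolding Good_def using jT[OF that] j by auto
    qed
    moreover have "T \<in> Good" if "T \<in> Gj" for T
      unfolding Good_def using jT[OF that] by auto
    ultimately show ?thesis by auto
  qed
  have finGood: "finite Good" unfolding Good_def by simp
  have "(\<Sum>T\<in>Gj. f T + f (insert j T)) = (\<Sum>S\<in>Gj \<union> insert j ` Gj. f S)"
    using disj finGj inj by (simp add: sum.union_disjoint sum.reindex sum.distrib)
  also have "\<dots> \<le> (\<Sum>S\<in>Good. f S)"
    using sub finGood fnn by (intro sum_mono2) auto
  finally have step1: "(\<Sum>T\<in>Gj. f T + f (insert j T)) \<le> (\<Sum>S\<in>Good. f S)" .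
  define h where "h = (\<lambda>i. a * X i j / \<sigma>)"
  have pair: "w' T * ((\<pi> / \<pi>0) * psij n p s a \<sigma> X j) \<le> f T + f (insert j T)" if T: "T \<in> Gj" for T
  proof -
    define A where "A = {\<xi> \<in> space (gauss_vec n). a/2 \<le> est (obs n p X \<sigma> (bvec a T) \<xi>) j}"
    have estm: "(\<lambda>\<xi>. est (obs n p X \<sigma> (bvec a T) \<xi>) j) \<in> borel_measurable (gauss_vec n)"
      using measurable_compose[OF obs_measurable est] by simp
    have A: "A \<in> sets (gauss_vec n)" unfolding A_def using estm by measurable
    have E1: "Err T = A" unfolding Err_def A_def using jT(1)[OF T] by auto
    have E2: "Err (insert j T) = {\<xi> \<in> space (gauss_vec n). gshift n h \<xi> \<notin> A}"
      unfolding Err_def A_def h_def using obs_shift[OF j jT(1)[OF T] \<sigma>] shift_space by auto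
    have w1: "w T = (1 - \<pi>) * w' T"
    proof -
      have "p - card T = Suc (card ({..<p} - {j}) - card T)" using jT(4)[OF T] j by simp
      then show ?thesis unfolding w_def w'_def by simp
    qed
    have w2: "w (insert j T) = \<pi> * w' T"
    proof -
      have "finite T" using jT(2)[OF T] finite_subset by blast
      then have "card (insert j T) = Suc (card T)" using jT(1)[OF T] by simp
      moreover have "p - Suc (card T) = card ({..<p} - {j}) - card T" using j by simp
      ultimately show ?thesis unfolding w_def w'_def by simp
    qed
    have w'nn: "w' T \<ge> 0" unfolding w'_def using \<pi> by simp
    define \<alpha> where "\<alpha> = measure (gauss_vec n) A"
    define \<beta> where "\<beta> = measure (gauss_vec n) {\<xi> \<in> space (gauss_vec n). gshift n h \<xi> \<notin> A}"
    have \<alpha>nn: "\<alpha> \<ge> 0" unfolding \<alpha>_def by simp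
    have psb: "psij n p s a \<sigma> X j \<le> (1 - \<pi>0) * \<alpha> + \<pi>0 * \<beta>"
      using psij_bound[OF \<sigma> a s0 sp cn A] unfolding \<alpha>_def \<beta>_def \<pi>0_def h_def .
    have "(\<pi> / \<pi>0) * ((1 - \<pi>0) * \<alpha> + \<pi>0 * \<beta>) \<le> (1 - \<pi>) * \<alpha> + \<pi> * \<beta>"
    proof -
      have "(\<pi> / \<pi>0) * (1 - \<pi>0) \<le> 1 - \<pi>" using \<pi> by (simp add: field_simps)
      then have "(\<pi> / \<pi>0) * (1 - \<pi>0) * \<alpha> \<le> (1 - \<pi>) * \<alpha>" using \<alpha>nn by (rule mult_right_mono)
      moreover have "(\<pi> / \<pi>0) * (\<pi>0 * \<beta>) = \<pi> * \<beta>" using \<pi> by simp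
      ultimately show ?thesis by (simp add: distrib_left mult.assoc)
    qed
    with psb have "(\<pi> / \<pi>0) * psij n p s a \<sigma> X j \<le> (1 - \<pi>) * \<alpha> + \<pi> * \<beta>"
      using \<pi> by (smt (verit) divide_pos_pos mult_left_mono)
    then have "w' T * ((\<pi> / \<pi>0) * psij n p s a \<sigma> X j) \<le> w' T * ((1 - \<pi>) * \<alpha> + \<pi> * \<beta>)"
      using w'nn by (rule mult_left_mono)
    also have "\<dots> = f T + f (insert j T)"
      unfolding f_def w1 w2 E1 E2 \<alpha>_def \<beta>_def by (simp add: algebra_simps)
    finally show ?thesis .
  qed
  have mass: "1 - E \<le> (\<Sum>T\<in>Gj. w' T)"
  proof -
    have "(\<Sum>T\<in>Pow Q. w' T) = 1" unfolding w'_def Q_def[symmetric] by (rule weight_sum[OF finQ])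
    moreover have "(\<Sum>T\<in>Pow Q. w' T) = (\<Sum>T\<in>Pow Q - Gj. w' T) + (\<Sum>T\<in>Gj. w' T)"
      by (rule sum.subset_diff) (use finQ in \<open>auto simp: Gj_def\<close>)
    moreover have PG: "Pow Q - Gj = {T \<in> Pow Q. s \<le> card T}" unfolding Gj_def by auto
    moreover have "(\<Sum>T\<in>Pow Q - Gj. w' T) \<le> E"
    proof -
      have "real (card Q) * \<pi> \<le> s'"
      proof -
        have "real (card Q) \<le> real p" using cardQ by simp
        then have "real (card Q) * \<pi> \<le> real p * \<pi>" using \<pi> by (intro mult_right_mono) auto
        also have "real p * \<pi> = s'" unfolding \<pi>_def using sp by simp
        finally show ?thesis .
      qed
      from chernoff[OF finQ s' \<pi>(1) _ this] \<pi> have "(\<Sum>T\<in>{T \<in> Pow Q. s \<le> card T}. w' T) \<le> E"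
        unfolding w'_def E_def Q_def by simp
      then show ?thesis unfolding PG .
    qed
    ultimately show ?thesis by linarith
  qed
  have psnn: "psij n p s a \<sigma> X j \<ge> 0" using sp by (intro psij_nonneg) simp
  have "(s' / real s) * psij n p s a \<sigma> X j * (1 - E) \<le> (s' / real s) * psij n p s a \<sigma> X j * (\<Sum>T\<in>Gj. w' T)"
    using mass psnn s' by (intro mult_left_mono) auto
  also have "\<dots> = (\<Sum>T\<in>Gj. w' T * ((\<pi> / \<pi>0) * psij n p s a \<sigma> X j))"
    unfolding rat by (simp add: sum_distrib_left sum_distrib_right sum_divide_distrib mult_ac)
  also have "\<dots> \<le> (\<Sum>T\<in>Gj. f T + f (insert j T))"
    by (intro sum_mono pair)
  also have "\<dots> \<le> (\<Sum>S\<in>Good. f S)" by (rule step1)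
  finally show ?thesis unfolding f_def w_def E_def .
qed

theorem theorem4:
  fixes n p s :: nat and X :: "nat \<Rightarrow> nat \<Rightarrow> real" and \<sigma> a q s' :: real
    and est :: "(nat \<Rightarrow> real) \<Rightarrow> (nat \<Rightarrow> real)"
  assumes "\<sigma> > 0" and "a > 0" and "q \<ge> 1" and "s < p"
    and "\<forall>j<p. colnorm2 n X j \<noteq> 0"
    and "\<forall>i<p. (\<lambda>y. est y i) \<in> borel_measurable (PiM {..<n} (\<lambda>_. borel))"
    and "0 < s'" and "s' < real s"
  shows "(SUP \<beta>\<in>Omega p s a. \<integral>\<^sup>+ \<xi>. ennreal (lq_pow p q (\<lambda>i. est (obs n p X \<sigma> \<beta> \<xi>) i - \<beta> i)) \<partial>gauss_vec n)
         \<ge> ennreal (a powr q * (s' / real s) *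
              (Psi n p s a \<sigma> X / 2 powr q - 2 * real s * exp (- (real s - s')\<^sup>2 / (2 * real s))))"
proof -
  note \<sigma> = assms(1) and a = assms(2) and q = assms(3) and sp = assms(4) and cn = assms(5)
    and est = assms(6) and s' = assms(7,8)
  interpret prob_space "gauss_vec n" by (rule gauss_vec_prob)
  have s0: "0 < s" using s' by simp
  define LHS where "LHS = (SUP \<beta>\<in>Omega p s a. \<integral>\<^sup>+ \<xi>. ennreal (lq_pow p q (\<lambda>i. est (obs n p X \<sigma> \<beta> \<xi>) i - \<beta> i)) \<partial>gauss_vec n)"
  define \<pi> where "\<pi> = s' / real p"
  have \<pi>: "0 < \<pi>" "\<pi> < 1" unfolding \<pi>_def using s' sp by auto
  define E where "E = exp (- ((real s - s')^2) / (2 * real s))"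
  define w where "w S = \<pi> ^ card S * (1 - \<pi>) ^ (p - card S)" for S :: "nat set"
  have wnn: "w S \<ge> 0" for S unfolding w_def using \<pi> by simp
  define Good where "Good = {S \<in> Pow {..<p}. card S \<le> s}"
  have finGood: "finite Good" unfolding Good_def by simp
  define Err where "Err S j = {\<xi> \<in> space (gauss_vec n). (a/2 \<le> est (obs n p X \<sigma> (bvec a S) \<xi>) j) \<noteq> (j \<in> S)}" for S j
  have Err_sets: "Err S j \<in> sets (gauss_vec n)" if "j < p" for S j
  proof -
    have "(\<lambda>\<xi>. est (obs n p X \<sigma> (bvec a S) \<xi>) j) \<in> borel_measurable (gauss_vec n)"
      using measurable_compose[OF obs_measurable est[rule_format, OF that]] by simp
    then show ?thesis unfolding Err_def by measurable
  qed
  define M where "M S = (\<Sum>j<p. measure (gauss_vec n) (Err S j))" for S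
  define c where "c = (a/2) powr q"
  have cnn: "c \<ge> 0" unfolding c_def by simp
  have stepA: "ennreal (c * M S) \<le> LHS" if S: "S \<in> Good" for S
  proof -
    have Om: "bvec a S \<in> Omega p s a" using S a unfolding Good_def by (intro bvec_Omega) auto
    have ij: "integrable (gauss_vec n) (indicator (Err S j) :: _ \<Rightarrow> real)" if "j \<in> {..<p}" for j
      using Err_sets[of j S] that by (intro integrable_real_indicator) (auto simp: less_top[symmetric])
    have isum: "(\<integral>\<xi>. (\<Sum>j\<in>{..<p}. indicator (Err S j) \<xi>) \<partial>gauss_vec n) = (\<Sum>j<p. measure (gauss_vec n) (Err S j))"
      using Err_sets by (subst Bochner_Integration.integral_sum[OF ij]) auto
    have int: "integrable (gauss_vec n) (\<lambda>\<xi>. c * (\<Sum>j<p. indicator (Err S j) \<xi>))"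
    proof -
      have "integrable (gauss_vec n) (\<lambda>\<xi>. \<Sum>j\<in>{..<p}. indicator (Err S j) \<xi> :: real)"
        by (rule Bochner_Integration.integrable_sum[OF ij])
      then show ?thesis by (rule integrable_mult_right)
    qed
    have "ennreal (c * M S) = ennreal (\<integral>\<xi>. c * (\<Sum>j<p. indicator (Err S j) \<xi>) \<partial>gauss_vec n)"
      unfolding M_def isum[symmetric] by simp
    also have "\<dots> = (\<integral>\<^sup>+\<xi>. ennreal (c * (\<Sum>j<p. indicator (Err S j) \<xi>)) \<partial>gauss_vec n)"
      using int cnn by (intro nn_integral_eq_integral[symmetric]) (auto intro!: AE_I2 mult_nonneg_nonneg sum_nonneg)
    also have "\<dots> \<le> (\<integral>\<^sup>+\<xi>. ennreal (lq_pow p q (\<lambda>i. est (obs n p X \<sigma> (bvec a S) \<xi>) i - bvec a S i)) \<partial>gauss_vec n)"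
    proof (intro nn_integral_mono ennreal_leI)
      fix \<xi> assume \<xi>: "\<xi> \<in> space (gauss_vec n)"
      have "(\<Sum>j<p. indicator (Err S j) \<xi>) = (\<Sum>j<p. indicator {y. (a/2 \<le> est y j) \<noteq> (j \<in> S)} (obs n p X \<sigma> (bvec a S) \<xi>) :: real)"
        using \<xi> by (intro sum.cong refl) (auto simp: Err_def indicator_def)
      then show "c * (\<Sum>j<p. indicator (Err S j) \<xi>) \<le> lq_pow p q (\<lambda>i. est (obs n p X \<sigma> (bvec a S) \<xi>) i - bvec a S i)"
        unfolding c_def using loss_lower[OF a q] by simp
    qed
    also have "\<dots> \<le> LHS" unfolding LHS_def using Om by (rule SUP_upper)
    finally show ?thesis .
  qed
  have stepB: "ennreal (\<Sum>S\<in>Good. w S * (c * M S)) \<le> LHS"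
  proof -
    have Mnn: "M S \<ge> 0" for S unfolding M_def by (simp add: sum_nonneg)
    have "ennreal (\<Sum>S\<in>Good. w S * (c * M S)) = (\<Sum>S\<in>Good. ennreal (w S) * ennreal (c * M S))"
      using wnn cnn Mnn by (simp add: sum_ennreal[symmetric] ennreal_mult)
    also have "\<dots> \<le> (\<Sum>S\<in>Good. ennreal (w S) * LHS)"
      using stepA by (intro sum_mono mult_left_mono) auto
    also have "\<dots> = ennreal (\<Sum>S\<in>Good. w S) * LHS"
    proof -
      have "ennreal (sum w Good) = (\<Sum>S\<in>Good. ennreal (w S))" using wnn by (rule sum_ennreal[symmetric])
      then show ?thesis by (simp add: sum_distrib_right)
    qed
    also have "\<dots> \<le> 1 * LHS"
    proof (rule mult_right_mono)
      have "(\<Sum>S\<in>Good. w S) \<le> (\<Sum>S\<in>Pow {..<p}. w S)"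
        using wnn by (intro sum_mono2) (auto simp: Good_def)
      also have "\<dots> = 1" using weight_sum[of "{..<p}" \<pi>] unfolding w_def by simp
      finally show "ennreal (\<Sum>S\<in>Good. w S) \<le> 1" by simp
    qed simp
    finally show ?thesis by simp
  qed
  have Cj: "(s' / real s) * psij n p s a \<sigma> X j * (1 - E) \<le> (\<Sum>S\<in>Good. w S * measure (gauss_vec n) (Err S j))"
    if j: "j < p" for j
    using coord_sum[where est=est and \<sigma>=\<sigma> and a=a and s=s and p=p and n=n and X=X and j=j and s'=s', OF \<sigma> a sp cn[rule_format, OF j] j est[rule_format, OF j] s']
    unfolding E_def w_def \<pi>_def Good_def Err_def by simp
  have sumC: "(s' / real s) * (1 - E) * Psi n p s a \<sigma> X \<le> (\<Sum>S\<in>Good. w S * M S)"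
  proof -
    have "(s' / real s) * (1 - E) * Psi n p s a \<sigma> X = (\<Sum>j<p. (s' / real s) * psij n p s a \<sigma> X j * (1 - E))"
      unfolding Psi_psij by (simp add: sum_distrib_left sum_distrib_right mult_ac)
    also have "\<dots> \<le> (\<Sum>j<p. \<Sum>S\<in>Good. w S * measure (gauss_vec n) (Err S j))"
      by (intro sum_mono Cj) simp
    also have "\<dots> = (\<Sum>S\<in>Good. w S * M S)"
      unfolding M_def by (simp add: sum_distrib_left sum.swap[of _ "{..<p}"])
    finally show ?thesis .
  qed
  have Psi_le: "Psi n p s a \<sigma> X \<le> real s"
  proof -
    have "Psi n p s a \<sigma> X \<le> (\<Sum>j<p. real s / real p)"
      unfolding Psi_psij using cn by (intro sum_mono psij_le[OF \<sigma> a s0 sp]) auto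
    also have "\<dots> = real s" using sp by simp
    finally show ?thesis .
  qed
  have Enn: "E \<ge> 0" unfolding E_def by simp
  have main: "(s' / real s) * Psi n p s a \<sigma> X - s' * E \<le> (\<Sum>S\<in>Good. w S * M S)"
  proof -
    have "(s' / real s) * E * Psi n p s a \<sigma> X \<le> (s' / real s) * E * real s"
      using Psi_le Enn s' by (intro mult_left_mono) auto
    also have "\<dots> = s' * E" using s0 by simp
    finally have "(s' / real s) * E * Psi n p s a \<sigma> X \<le> s' * E" .
    moreover have "(s' / real s) * Psi n p s a \<sigma> X = (s' / real s) * (1 - E) * Psi n p s a \<sigma> X + (s' / real s) * E * Psi n p s a \<sigma> X"
      by (simp add: algebra_simps add_divide_distrib[symmetric])
    ultimately show ?thesis using sumC by linarith
  qed
  have c2: "c = a powr q / 2 powr q" unfolding c_def using a by (simp add: powr_divide)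
  have two: "2 powr q \<ge> 1" using q by (simp add: ge_one_powr_ge_zero)
  have "a powr q * (s' / real s) * (Psi n p s a \<sigma> X / 2 powr q - 2 * real s * E)
      \<le> c * ((s' / real s) * Psi n p s a \<sigma> X - s' * E)"
  proof -
    have "a powr q * (s' / real s) * (2 * real s * E) = 2 * (a powr q * s' * E)"
      using s0 by simp
    moreover have "c * (s' * E) \<le> 2 * (a powr q * s' * E)"
    proof -
      have "c \<le> a powr q" unfolding c2 using two by (simp add: divide_le_eq mult_le_cancel_left1 order_less_le_trans[OF zero_less_one])
      then have "c * (s' * E) \<le> a powr q * (s' * E)" using s' Enn by (intro mult_right_mono) auto
      also have "\<dots> \<le> 2 * (a powr q * s' * E)" using s' Enn by simp
      finally show ?thesis .
    qed
    moreover have "a powr q * (s' / real s) * (Psi n p s a \<sigma> X / 2 powr q) = c * ((s' / real s) * Psi n p s a \<sigma> X)"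
      unfolding c2 by (simp add: mult_ac)
    ultimately show ?thesis by (simp add: algebra_simps)
  qed
  also have "\<dots> \<le> c * (\<Sum>S\<in>Good. w S * M S)"
    using main cnn by (rule mult_left_mono)
  also have "\<dots> = (\<Sum>S\<in>Good. w S * (c * M S))"
    by (simp add: sum_distrib_left mult_ac)
  finally have fin: "a powr q * (s' / real s) * (Psi n p s a \<sigma> X / 2 powr q - 2 * real s * E) \<le> (\<Sum>S\<in>Good. w S * (c * M S))" .
  have "ennreal (a powr q * (s' / real s) * (Psi n p s a \<sigma> X / 2 powr q - 2 * real s * E)) \<le> LHS"
    using ennreal_leI[OF fin] stepB by (rule order_trans)
  moreover have "exp (- (real s - s')\<^sup>2 / (2 * real s)) = E" unfolding E_def by simp
  ultimately show ?thesis unfolding LHS_def by simp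
qed

end
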